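(* For $n\geq 2$ let $h_n$ be the number of ordered pairs of words $(w,z)$ over the alphabet $\{A,B,C,D\}$ satisfying: (i) both $w$ and $z$ start with the letter $A$, and $|w|+|z|=n$; (ii) $w$ and $z$ contain the same number of letters $A$; (iii) neither $w$ nor $z$ contains a $CB$-factor (a letter $C$ immediately followed by a letter $B$); (iv) for all $i$, if the $i$th letter $A$ from the right in $w$ is immediately preceded by a $C$ and immediately followed by a $B$, then the $i$th segment of $z$ from the left contains a letter $B$. Then there exists a positive constant $c$ such that $h_n\leq c\cdot 3.709381^n$ for all $n\geq 2$.
   Context: A segment of a word $v$ over $\{A,B,C,D\}$ is a factor (consecutive letters) that starts with a letter $A$ and ends immediately before the next letter $A$, or at the end of $v$. The $i$th segment from the left is the one starting at the $i$th letter $A$ from the left. The words $w$ and $z$ need not have the same length. *)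

theory Defs
  imports Complex_Main
begin

datatype letter = A | B | C | D

type_synonym word = "letter list"

definition A_positions :: "word \<Rightarrow> nat list" where
  "A_positions v = filter (\<lambda>j. v ! j = A) [0..<length v]"

text \<open>The (i+1)-th segment from the left (0-based index i): starts at the (i+1)-th A
  and ends immediately before the next A, or at the end of the word.\<close>
definition segment :: "word \<Rightarrow> nat \<Rightarrow> word" where
  "segment v i = (let ps = A_positions v; s = ps ! i;
                      e = (if Suc i < length ps then ps ! Suc i else length v)
                  in take (e - s) (drop s v))"

definition no_CB :: "word \<Rightarrow> bool" where
  "no_CB v \<longleftrightarrow> \<not> (\<exists>j. Suc j < length v \<and> v ! j = C \<and> v ! Suc j = B)"

text \<open>Condition (iv), with 0-based i: the (i+1)-th A from the right in w.\<close>
definition cond_iv :: "word \<Rightarrow> word \<Rightarrow> bool" where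
  "cond_iv w z \<longleftrightarrow> (\<forall>i < length (A_positions w).
     (let p = rev (A_positions w) ! i in
       (0 < p \<and> w ! (p - 1) = C \<and> Suc p < length w \<and> w ! Suc p = B)
         \<longrightarrow> B \<in> set (segment z i)))"

definition good_pair :: "nat \<Rightarrow> word \<Rightarrow> word \<Rightarrow> bool" where
  "good_pair n w z \<longleftrightarrow>
     w \<noteq> [] \<and> z \<noteq> [] \<and> hd w = A \<and> hd z = A \<and> length w + length z = n \<and>
     length (A_positions w) = length (A_positions z) \<and>
     no_CB w \<and> no_CB z \<and> cond_iv w z"

definition h :: "nat \<Rightarrow> nat" where
  "h n = card {(w, z). good_pair n w z}"

end

theory Submission
  imports Defs
begin

datatype st = S | VJ bool | V bool bool bool | Z bool bool

fun dl :: "st \<Rightarrow> letter \<Rightarrow> st option" where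
  "dl S a = (if a = A then Some (VJ False) else None)"
| "dl (VJ d) a = (case a of A \<Rightarrow> Some (Z False False) | B \<Rightarrow> Some (V d True False)
      | C \<Rightarrow> Some (V d False True) | D \<Rightarrow> Some (V d False False))"
| "dl (V d sb lc) a = (case a of A \<Rightarrow> (if d \<and> lc then None else Some (Z sb False))
      | B \<Rightarrow> (if lc then None else Some (V d sb False))
      | C \<Rightarrow> Some (V d sb True) | D \<Rightarrow> Some (V d sb False))"
| "dl (Z p lc) a = (case a of A \<Rightarrow> Some (VJ p) | B \<Rightarrow> (if lc then None else Some (Z False False))
      | C \<Rightarrow> Some (Z p True) | D \<Rightarrow> Some (Z p False))"

fun run :: "st \<Rightarrow> word \<Rightarrow> st option" where
  "run q [] = Some q"
| "run q (a#s) = (case dl q a of None \<Rightarrow> None | Some q' \<Rightarrow> run q' s)"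

fun final :: "st \<Rightarrow> bool" where
  "final (Z _ _) = True"
| "final _ = False"

definition acc :: "st \<Rightarrow> word \<Rightarrow> bool" where
  "acc q s = (case run q s of None \<Rightarrow> False | Some q' \<Rightarrow> final q')"

lemma run_append: "run q (s@t) = (case run q s of None \<Rightarrow> None | Some q' \<Rightarrow> run q' t)"
  by (induction s arbitrary: q) (auto split: option.split)

lemma acc_Cons: "acc q (a#s) = (case dl q a of None \<Rightarrow> False | Some q' \<Rightarrow> acc q' s)"
  by (auto simp: acc_def split: option.split)

fun ncb :: "word \<Rightarrow> bool" where
  "ncb (x#y#s) = (\<not>(x = C \<and> y = B) \<and> ncb (y#s))"
| "ncb _ = True"

lemma ncb_Cons: "ncb (a#y) \<longleftrightarrow> \<not>(a = C \<and> y \<noteq> [] \<and> hd y = B) \<and> ncb y"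
  by (cases y) auto

lemma no_CB_Cons: "no_CB (x#v) \<longleftrightarrow> \<not>(x = C \<and> v \<noteq> [] \<and> hd v = B) \<and> no_CB v"
proof
  assume h: "no_CB (x#v)"
  have 1: "\<not>(x = C \<and> v \<noteq> [] \<and> hd v = B)"
  proof
    assume "x = C \<and> v \<noteq> [] \<and> hd v = B"
    then show False using h unfolding no_CB_def
      by (metis Suc_less_eq hd_conv_nth length_Cons length_greater_0_conv nth_Cons_0 nth_Cons_Suc)
  qed
  have "no_CB v" unfolding no_CB_def
  proof
    assume "\<exists>j. Suc j < length v \<and> v ! j = C \<and> v ! Suc j = B"
    then obtain j where "Suc j < length v \<and> v ! j = C \<and> v ! Suc j = B" by blast
    then have "Suc (Suc j) < length (x#v) \<and> (x#v) ! Suc j = C \<and> (x#v) ! Suc (Suc j) = B" by simp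
    then show False using h unfolding no_CB_def by blast
  qed
  then show "\<not>(x = C \<and> v \<noteq> [] \<and> hd v = B) \<and> no_CB v" using 1 by blast
next
  assume h: "\<not>(x = C \<and> v \<noteq> [] \<and> hd v = B) \<and> no_CB v"
  show "no_CB (x#v)" unfolding no_CB_def
  proof
    assume "\<exists>j. Suc j < length (x#v) \<and> (x#v) ! j = C \<and> (x#v) ! Suc j = B"
    then obtain j where j: "Suc j < length (x#v) \<and> (x#v) ! j = C \<and> (x#v) ! Suc j = B" by blast
    show False
    proof (cases j)
      case 0
      then show False using j h by (auto simp: hd_conv_nth)
    next
      case (Suc k)
      then show False using j h unfolding no_CB_def by auto
    qed
  qed
qed

lemma no_CB_ncb: "no_CB v = ncb v"
proof (induction v)
  case Nil
  then show ?case by (simp add: no_CB_def)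
next
  case (Cons x v)
  then show ?case by (simp add: no_CB_Cons ncb_Cons)
qed

lemma ncb_append: "ncb (xs@ys) \<longleftrightarrow> ncb xs \<and> ncb ys \<and> \<not>(xs \<noteq> [] \<and> ys \<noteq> [] \<and> last xs = C \<and> hd ys = B)"
proof (induction xs)
  case Nil
  then show ?case by simp
next
  case (Cons x xs)
  then show ?case by (cases xs) (auto simp: ncb_Cons)
qed

lemma run_Z: "A \<notin> set y \<Longrightarrow> ncb y \<Longrightarrow> \<not>(lc \<and> y \<noteq> [] \<and> hd y = B) \<Longrightarrow>
  run (Z p lc) y = Some (Z (p \<and> B \<notin> set y) (if y = [] then lc else last y = C))"
proof (induction y arbitrary: p lc)
  case Nil
  then show ?case by simp
next
  case (Cons a y)
  have IH: "\<And>p lc. \<not>(lc \<and> y \<noteq> [] \<and> hd y = B) \<Longrightarrow>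
     run (Z p lc) y = Some (Z (p \<and> B \<notin> set y) (if y = [] then lc else last y = C))"
    using Cons by (simp add: ncb_Cons)
  have h: "\<not>(a = C \<and> y \<noteq> [] \<and> hd y = B)" using Cons.prems by (simp add: ncb_Cons)
  show ?case
  proof (cases a)
    case A
    then show ?thesis using Cons.prems by simp
  next
    case B
    then show ?thesis using Cons.prems IH[of False False] by auto
  next
    case C
    then show ?thesis using IH[of True p] h by auto
  next
    case D
    then show ?thesis using IH[of False p] h by auto
  qed
qed

lemma run_V: "A \<notin> set y \<Longrightarrow> ncb y \<Longrightarrow> \<not>(lc \<and> y \<noteq> [] \<and> hd y = B) \<Longrightarrow>
  run (V d sb lc) y = Some (V d sb (if y = [] then lc else last y = C))"
proof (induction y arbitrary: lc)
  case Nil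
  then show ?case by simp
next
  case (Cons a y)
  have IH: "\<And>lc. \<not>(lc \<and> y \<noteq> [] \<and> hd y = B) \<Longrightarrow>
     run (V d sb lc) y = Some (V d sb (if y = [] then lc else last y = C))"
    using Cons by (simp add: ncb_Cons)
  have h: "\<not>(a = C \<and> y \<noteq> [] \<and> hd y = B)" using Cons.prems by (simp add: ncb_Cons)
  show ?case
  proof (cases a)
    case A
    then show ?thesis using Cons.prems by simp
  next
    case B
    then show ?thesis using Cons.prems IH[of False] by auto
  next
    case C
    then show ?thesis using IH[of True] h by auto
  next
    case D
    then show ?thesis using IH[of False] h by auto
  qed
qed

lemma run_VJ: "A \<notin> set y \<Longrightarrow> ncb y \<Longrightarrow>
  run (VJ d) y = Some (if y = [] then VJ d else V d (hd y = B) (last y = C))"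
proof (cases y)
  case Nil
  then show ?thesis by simp
next
  case (Cons a y')
  assume a1: "A \<notin> set y" and a2: "ncb y"
  have h: "\<not>(a = C \<and> y' \<noteq> [] \<and> hd y' = B)" "ncb y'" "A \<notin> set y'" "a \<noteq> A"
    using a1 a2 Cons by (auto simp: ncb_Cons)
  have "dl (VJ d) a = Some (V d (a = B) (a = C))" using h(4) by (cases a) auto
  then show ?thesis using Cons run_V[OF h(3) h(2), of "a = C" d "a = B"] h(1) by auto
qed

definition cw :: "word list \<Rightarrow> word" where
  "cw Us = concat (map (\<lambda>u. A # u) Us)"

definition afree :: "word list \<Rightarrow> bool" where
  "afree Us \<longleftrightarrow> (\<forall>u\<in>set Us. A \<notin> set u)"

lemma cw_Nil[simp]: "cw [] = []" by (simp add: cw_def)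
lemma cw_Cons[simp]: "cw (U#Us) = A # U @ cw Us" by (simp add: cw_def)
lemma cw_snoc: "cw (Us@[U]) = cw Us @ A # U" by (simp add: cw_def)
lemma cw_append: "cw (Us@Vs) = cw Us @ cw Vs" by (simp add: cw_def)
lemma afree_Cons[simp]: "afree (U#Us) \<longleftrightarrow> A \<notin> set U \<and> afree Us" by (simp add: afree_def)
lemma afree_Nil[simp]: "afree []" by (simp add: afree_def)
lemma afree_append[simp]: "afree (Us@Vs) \<longleftrightarrow> afree Us \<and> afree Vs" by (auto simp: afree_def)
lemma afree_rev[simp]: "afree (rev Us) \<longleftrightarrow> afree Us" by (auto simp: afree_def)

lemma length_cw: "length (cw Us) = (\<Sum>u\<leftarrow>Us. Suc (length u))"
  by (induction Us) auto

lemma length_cw_rev: "length (cw (rev Us)) = length (cw Us)"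
  by (induction Us) (auto simp: cw_append)

lemma cw_last: "Us \<noteq> [] \<Longrightarrow> last (cw Us) = last (A # last Us)"
proof -
  assume "Us \<noteq> []"
  then obtain Ws W where "Us = Ws @ [W]" by (metis append_butlast_last_id)
  then show ?thesis by (simp add: cw_snoc)
qed

lemma rep_ex: "w = [] \<or> hd w = A \<Longrightarrow> \<exists>Us. afree Us \<and> cw Us = w"
proof (induction w rule: rev_induct)
  case Nil
  then show ?case by (intro exI[of _ "[]"]) simp
next
  case (snoc x w)
  show ?case
  proof (cases "x = A")
    case True
    have "w = [] \<or> hd w = A" using snoc.prems by (cases w) auto
    then obtain Us where "afree Us" "cw Us = w" using snoc.IH by blast
    then show ?thesis using True by (intro exI[of _ "Us @ [[]]"]) (simp add: cw_snoc)
  next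
    case False
    then have wne: "w \<noteq> []" using snoc.prems by auto
    then have "hd w = A" using snoc.prems by simp
    then obtain Us where U: "afree Us" "cw Us = w" using snoc.IH by blast
    then have "Us \<noteq> []" using wne by auto
    then obtain Ws W where UW: "Us = Ws @ [W]" by (metis append_butlast_last_id)
    show ?thesis using U UW False
      by (intro exI[of _ "Ws @ [W @ [x]]"]) (auto simp: cw_snoc)
  qed
qed

lemma takeWhile_cw: "afree Us \<Longrightarrow> takeWhile (\<lambda>x. x \<noteq> A) (cw Us) = []"
  by (cases Us) auto

lemma cw_inj: "afree Us \<Longrightarrow> afree Us' \<Longrightarrow> cw Us = cw Us' \<Longrightarrow> Us = Us'"
proof (induction Us arbitrary: Us')
  case Nil
  then show ?case by (cases Us') auto
next
  case (Cons U Us)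
  then obtain U' Us'' where U': "Us' = U' # Us''" by (cases Us') auto
  have e: "U @ cw Us = U' @ cw Us''" using Cons.prems U' by simp
  have "takeWhile (\<lambda>x. x \<noteq> A) (U @ cw Us) = U"
    using Cons.prems takeWhile_cw[of Us] by (auto simp: takeWhile_append)
  moreover have "takeWhile (\<lambda>x. x \<noteq> A) (U' @ cw Us'') = U'"
    using Cons.prems U' takeWhile_cw[of Us''] by (auto simp: takeWhile_append)
  ultimately have "U = U'" using e by simp
  then have "cw Us = cw Us''" using e by simp
  then show ?case using Cons U' \<open>U = U'\<close> by simp
qed

lemma AP_append: "A_positions (xs@ys) = A_positions xs @ map ((+) (length xs)) (A_positions ys)"
proof -
  have u: "[0..<length (xs@ys)] = [0..<length xs] @ map ((+) (length xs)) [0..<length ys]"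
  proof -
    have "map ((+) (length xs)) [0..<length ys] = [length xs..<length xs + length ys]"
      by (rule nth_equalityI) auto
    then show ?thesis by (simp add: upt_add_eq_append[of 0 "length xs" "length ys", simplified])
  qed
  have 1: "filter (\<lambda>j. (xs@ys) ! j = A) [0..<length xs] = filter (\<lambda>j. xs ! j = A) [0..<length xs]"
    by (rule filter_cong) (auto simp: nth_append)
  have 2: "filter (\<lambda>j. (xs@ys) ! j = A) (map ((+) (length xs)) [0..<length ys])
         = map ((+) (length xs)) (filter (\<lambda>j. ys ! j = A) [0..<length ys])"
    by (simp add: filter_map o_def nth_append)
  show ?thesis unfolding A_positions_def u by (simp add: 1 2)
qed

lemma AP_Nil[simp]: "A_positions [] = []" by (simp add: A_positions_def)

lemma AP_free: "A \<notin> set u \<Longrightarrow> A_positions u = []"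
  unfolding A_positions_def by (auto simp: filter_empty_conv) (metis nth_mem)

lemma AP_Au: "A \<notin> set u \<Longrightarrow> A_positions (A#u) = [0]"
  using AP_append[of "[A]" u] AP_free[of u] by (simp add: A_positions_def)

lemma AP_cw_Cons: "A \<notin> set U \<Longrightarrow> A_positions (A # U @ cw Us) = 0 # map ((+) (Suc (length U))) (A_positions (cw Us))"
  using AP_append[of "A#U" "cw Us"] AP_Au[of U] by simp

lemma AP_cw_snoc: "A \<notin> set U \<Longrightarrow> A_positions (cw (Us@[U])) = A_positions (cw Us) @ [length (cw Us)]"
  using AP_append[of "cw Us" "A#U"] AP_Au[of U] by (simp add: cw_snoc)

lemma AP_len: "afree Us \<Longrightarrow> length (A_positions (cw Us)) = length Us"
  by (induction Us) (auto simp: AP_cw_Cons)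

lemma AP_lt: "p \<in> set (A_positions x) \<Longrightarrow> p < length x \<and> x ! p = A"
  unfolding A_positions_def by auto

lemma seg0: "afree (Y#Ys) \<Longrightarrow> segment (cw (Y#Ys)) 0 = A#Y"
proof -
  assume af: "afree (Y#Ys)"
  show ?thesis
  proof (cases Ys)
    case Nil
    then show ?thesis using af by (simp add: segment_def AP_Au Let_def)
  next
    case (Cons Y' Ys')
    then have "A_positions (cw Ys) ! 0 = 0" using af by (simp add: AP_cw_Cons)
    moreover have "length (A_positions (cw Ys)) > 0" using af Cons by (simp add: AP_cw_Cons)
    ultimately show ?thesis using af by (simp add: segment_def AP_cw_Cons Let_def)
  qed
qed

lemma segS: "afree (Y#Ys) \<Longrightarrow> i < length Ys \<Longrightarrow> segment (cw (Y#Ys)) (Suc i) = segment (cw Ys) i"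
proof -
  assume af: "afree (Y#Ys)" and i: "i < length Ys"
  define ps where "ps = A_positions (cw Ys)"
  define m where "m = Suc (length Y)"
  have lp: "length ps = length Ys" using af by (simp add: ps_def AP_len)
  have P: "A_positions (cw (Y#Ys)) = 0 # map ((+) m) ps" using af by (simp add: AP_cw_Cons ps_def m_def)
  have dr: "drop (m + ps ! i) (cw (Y#Ys)) = drop (ps ! i) (cw Ys)"
    by (simp add: m_def)
  show ?thesis
  proof (cases "Suc i < length ps")
    case True
    have "ps ! Suc i \<ge> ps ! i \<or> True" by simp
    show ?thesis unfolding segment_def Let_def P ps_def[symmetric] using True i lp
      by (simp add: dr[simplified] m_def)
  next
    case False
    show ?thesis unfolding segment_def Let_def P ps_def[symmetric] using False i lp
      by (simp add: dr[simplified] m_def)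
  qed
qed

fun segc :: "word list \<Rightarrow> word list \<Rightarrow> bool" where
  "segc (v#vs) (y#ys) = ((vs \<noteq> [] \<and> last (A # hd vs) = C \<and> v \<noteq> [] \<and> hd v = B \<longrightarrow> B \<in> set y) \<and> segc vs ys)"
| "segc _ _ = True"

lemma cond_seg: "afree Us \<Longrightarrow> afree Ys \<Longrightarrow> length Us = length Ys \<Longrightarrow> cond_iv (cw Us) (cw Ys)
   \<Longrightarrow> segc (rev Us) Ys"
proof (induction Us arbitrary: Ys rule: rev_induct)
  case Nil
  then show ?case by simp
next
  case (snoc U Us)
  obtain Y Ys' where Y: "Ys = Y # Ys'" using snoc.prems by (cases Ys) auto
  define w where "w = cw (Us @ [U])"
  define m where "m = length (cw Us)"
  have afU: "A \<notin> set U" "afree Us" using snoc.prems by auto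
  have afY: "afree (Y#Ys')" using snoc.prems Y by simp
  have lenU: "length Us = length Ys'" using snoc.prems Y by simp
  have w: "w = cw Us @ A # U" by (simp add: w_def cw_snoc)
  have APw: "A_positions w = A_positions (cw Us) @ [m]" using afU by (simp add: w_def AP_cw_snoc m_def)
  have lAP: "length (A_positions (cw Us)) = length Us" using afU AP_len by blast
  have ci: "cond_iv w (cw (Y#Ys'))" using snoc.prems Y w_def by simp
  have c0: "rev Us \<noteq> [] \<and> last (A # hd (rev Us)) = C \<and> U \<noteq> [] \<and> hd U = B \<longrightarrow> B \<in> set Y"
  proof
    assume h: "rev Us \<noteq> [] \<and> last (A # hd (rev Us)) = C \<and> U \<noteq> [] \<and> hd U = B"
    then have une: "Us \<noteq> []" by simp
    have cwne: "cw Us \<noteq> []" using une by (cases Us) auto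
    have m0: "0 < m" using cwne by (simp add: m_def)
    have "last (cw Us) = C" using h une cw_last[OF une] by (simp add: hd_rev)
    then have wm1: "w ! (m - 1) = C" using cwne m0
      by (simp add: w nth_append m_def last_conv_nth)
    have ws: "Suc m < length w \<and> w ! Suc m = B" using h by (cases U) (auto simp: w nth_append m_def)
    have "0 < length (A_positions w)" by (simp add: APw)
    with ci have "(let p = rev (A_positions w) ! 0 in
       (0 < p \<and> w ! (p - 1) = C \<and> Suc p < length w \<and> w ! Suc p = B)
         \<longrightarrow> B \<in> set (segment (cw (Y#Ys')) 0))" unfolding cond_iv_def by blast
    then have "B \<in> set (segment (cw (Y#Ys')) 0)" using m0 wm1 ws by (simp add: APw Let_def)
    then show "B \<in> set Y" using seg0[OF afY] by simp
  qed
  have "cond_iv (cw Us) (cw Ys')"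
    unfolding cond_iv_def Let_def
  proof (intro allI impI)
    fix i assume i: "i < length (A_positions (cw Us))"
    define p where "p = rev (A_positions (cw Us)) ! i"
    assume pr: "0 < rev (A_positions (cw Us)) ! i \<and>
       cw Us ! (rev (A_positions (cw Us)) ! i - 1) = C \<and>
       Suc (rev (A_positions (cw Us)) ! i) < length (cw Us) \<and> cw Us ! Suc (rev (A_positions (cw Us)) ! i) = B"
    then have pr: "0 < p \<and> cw Us ! (p - 1) = C \<and> Suc p < length (cw Us) \<and> cw Us ! Suc p = B"
      by (simp add: p_def)
    have pw: "rev (A_positions w) ! Suc i = p" by (simp add: APw p_def)
    have "Suc i < length (A_positions w)" using i by (simp add: APw)
    with ci have "(let p = rev (A_positions w) ! Suc i in
       (0 < p \<and> w ! (p - 1) = C \<and> Suc p < length w \<and> w ! Suc p = B)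
         \<longrightarrow> B \<in> set (segment (cw (Y#Ys')) (Suc i)))" unfolding cond_iv_def by blast
    then have "(0 < p \<and> w ! (p - 1) = C \<and> Suc p < length w \<and> w ! Suc p = B)
         \<longrightarrow> B \<in> set (segment (cw (Y#Ys')) (Suc i))" by (simp add: pw Let_def)
    moreover have "0 < p \<and> w ! (p - 1) = C \<and> Suc p < length w \<and> w ! Suc p = B"
    proof -
      have b1: "p - 1 < length (cw Us)" "Suc p < length (cw Us)" using pr by linarith+
      have "w ! (p - 1) = cw Us ! (p - 1)" unfolding w using b1(1) by (rule nth_append_left)
      moreover have "w ! Suc p = cw Us ! Suc p" unfolding w using b1(2) by (rule nth_append_left)
      moreover have "length (cw Us) \<le> length w" by (simp add: w)
      ultimately show ?thesis using pr by auto
    qed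
    ultimately have "B \<in> set (segment (cw (Y#Ys')) (Suc i))" by blast
    moreover have "i < length Ys'" using i lAP lenU by simp
    ultimately show "B \<in> set (segment (cw Ys') i)" using segS[OF afY] by simp
  qed
  then have "segc (rev Us) Ys'" using snoc.IH afU afY lenU by simp
  then show ?case using c0 Y by simp
qed

fun il :: "'a list \<Rightarrow> 'a list \<Rightarrow> 'a list" where
  "il (x#xs) (y#ys) = x # y # il xs ys"
| "il _ _ = []"

lemma il_inj: "length xs = length ys \<Longrightarrow> length xs' = length ys' \<Longrightarrow> il xs ys = il xs' ys'
   \<Longrightarrow> xs = xs' \<and> ys = ys'"
proof (induction xs arbitrary: ys xs' ys')
  case Nil
  then show ?case by (cases xs'; cases ys') auto
next
  case (Cons x xs)
  then obtain y ys1 where "ys = y # ys1" by (cases ys) auto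
  moreover obtain x' xs1 y' ys2 where "xs' = x' # xs1" "ys' = y' # ys2"
    using Cons.prems \<open>ys = y # ys1\<close> by (cases xs'; cases ys') auto
  ultimately show ?case using Cons by auto
qed

lemma afree_il: "afree xs \<Longrightarrow> afree ys \<Longrightarrow> afree (il xs ys)"
  by (induction xs ys rule: il.induct) auto

lemma length_cw_il: "length xs = length ys \<Longrightarrow> length (cw (il xs ys)) = length (cw xs) + length (cw ys)"
proof (induction xs arbitrary: ys)
  case Nil then show ?case by simp
next
  case (Cons x xs) then show ?case by (cases ys) auto
qed

lemma acc_main: "length vs = length ys \<Longrightarrow> vs \<noteq> [] \<Longrightarrow> afree vs \<Longrightarrow> afree ys \<Longrightarrow>
  (\<forall>u\<in>set vs. ncb u) \<Longrightarrow> (\<forall>u\<in>set ys. ncb u) \<Longrightarrow> segc vs ys \<Longrightarrow>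
  \<not>(d \<and> last (A # hd vs) = C) \<Longrightarrow> acc (VJ d) (tl (cw (il vs ys)))"
proof (induction vs arbitrary: ys d)
  case Nil
  then show ?case by simp
next
  case (Cons v vs)
  obtain y ys' where Y: "ys = y # ys'" using Cons.prems by (cases ys) auto
  have av: "A \<notin> set v" "ncb v" "A \<notin> set y" "ncb y" using Cons.prems Y by auto
  define sb where "sb = (v \<noteq> [] \<and> hd v = B)"
  have r1: "run (VJ d) (v @ [A]) = Some (Z sb False)"
  proof (cases "v = []")
    case True then show ?thesis by (simp add: sb_def)
  next
    case False
    then have "\<not>(d \<and> last v = C)" using Cons.prems by simp
    then show ?thesis using False run_VJ[OF av(1,2), of d] by (simp add: run_append sb_def)
  qed
  define p where "p = (sb \<and> B \<notin> set y)"
  define lc where "lc = (if y = [] then False else last y = C)"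
  have r2: "run (Z sb False) y = Some (Z p lc)" using run_Z[OF av(3,4), of False sb] by (simp add: p_def lc_def)
  define R where "R = cw (il vs ys')"
  have tl: "tl (cw (il (v#vs) ys)) = (v @ [A]) @ y @ R" by (simp add: Y R_def)
  have rr: "run (VJ d) ((v @ [A]) @ y @ R) = run (Z p lc) R"
  proof -
    have "run (VJ d) ((v @ [A]) @ y @ R) = (case run (VJ d) (v @ [A]) of None \<Rightarrow> None | Some q' \<Rightarrow> run q' (y @ R))"
      by (rule run_append)
    also have "\<dots> = run (Z sb False) (y @ R)" unfolding r1 by simp
    also have "\<dots> = (case run (Z sb False) y of None \<Rightarrow> None | Some q' \<Rightarrow> run q' R)"
      by (rule run_append)
    also have "\<dots> = run (Z p lc) R" unfolding r2 by simp
    finally show ?thesis .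
  qed
  show ?case
  proof (cases "vs = []")
    case True
    then have "R = []" by (simp add: R_def)
    then have "run (VJ d) (tl (cw (il (v#vs) ys))) = Some (Z p lc)" unfolding tl rr by simp
    then show ?thesis unfolding acc_def by simp
  next
    case False
    then obtain v' vs' where vs: "vs = v' # vs'" by (cases vs) auto
    obtain y' ys'' where ys': "ys' = y' # ys''" using vs Y Cons.prems(1) by (cases ys') auto
    have Rt: "R = A # tl R" unfolding R_def vs ys' by simp
    have sg: "segc (v#vs) (y#ys')" using Cons.prems(7) Y by simp
    then have sc1: "segc vs ys'" by simp
    have cnd: "vs \<noteq> [] \<and> last (A # hd vs) = C \<and> v \<noteq> [] \<and> hd v = B \<longrightarrow> B \<in> set y"
      using sg by simp
    have sc2: "\<not>(p \<and> last (A # hd vs) = C)"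
      using cnd False unfolding p_def sb_def by blast
    have lens: "length vs = length ys'" using Cons.prems(1) Y by simp
    have "acc (VJ p) (tl (cw (il vs ys')))"
      by (rule Cons.IH[OF lens False]) (use Cons.prems Y sc1 sc2 in auto)
    then have "acc (VJ p) (tl R)" by (simp add: R_def)
    then have "acc (Z p lc) (A # tl R)" by (simp add: acc_Cons)
    then have "acc (Z p lc) R" using Rt by simp
    then show ?thesis unfolding tl acc_def rr by (simp add: acc_def)
  qed
qed

lemma UNIV_letter: "(UNIV :: letter set) = {A, B, C, D}"
  using letter.exhaust by auto

instance letter :: finite
  by standard (simp add: UNIV_letter)

lemma finite_len: "finite {s::word. length s = n \<and> P s}"
proof -
  have "finite {xs::word. set xs \<subseteq> UNIV \<and> length xs = n}"
    by (rule finite_lists_length_eq) simp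
  then show ?thesis by (rule rev_finite_subset) auto
qed

lemma card_Suc_split: "card {s::word. length s = Suc n \<and> P s} =
   card {s. length s = n \<and> P (A#s)} + card {s. length s = n \<and> P (B#s)} +
   (card {s. length s = n \<and> P (C#s)} + card {s. length s = n \<and> P (D#s)})"
proof -
  define S where "S a = {s. length s = n \<and> P (a#s)}" for a
  have eq: "{s::word. length s = Suc n \<and> P s} = ((Cons A ` S A \<union> Cons B ` S B) \<union> (Cons C ` S C \<union> Cons D ` S D))"
  proof
    show "{s::word. length s = Suc n \<and> P s} \<subseteq> ((Cons A ` S A \<union> Cons B ` S B) \<union> (Cons C ` S C \<union> Cons D ` S D))"
    proof
      fix s assume "s \<in> {s::word. length s = Suc n \<and> P s}"
      then obtain x t where st: "s = x # t" "length t = n" "P (x#t)" by (cases s) auto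
      then show "s \<in> ((Cons A ` S A \<union> Cons B ` S B) \<union> (Cons C ` S C \<union> Cons D ` S D))"
        by (cases x) (auto simp: S_def)
    qed
  qed (auto simp: S_def)
  have fin: "finite (S a)" for a unfolding S_def by (rule finite_len)
  have ci: "card (Cons a ` S a) = card (S a)" for a by (rule card_image) simp
  have "card {s::word. length s = Suc n \<and> P s} = card (Cons A ` S A \<union> Cons B ` S B) + card (Cons C ` S C \<union> Cons D ` S D)"
    unfolding eq by (rule card_Un_disjoint) (auto simp: fin)
  also have "\<dots> = (card (S A) + card (S B)) + (card (S C) + card (S D))"
    by (subst card_Un_disjoint, auto simp: fin ci, subst card_Un_disjoint, auto simp: fin ci)
  finally show ?thesis by (simp add: S_def)
qed

fun vv :: "st \<Rightarrow> real" where
  "vv S = 1133360808"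
| "vv (VJ False) = 4204066904"
| "vv (VJ True) = 3070706097"
| "vv (V False False False) = 4386649587"
| "vv (V False False True) = 3204066904"
| "vv (V False True False) = 3709380876"
| "vv (V False True True) = 2709380876"
| "vv (V True False False) = 3204066904"
| "vv (V True False True) = 1182582683"
| "vv (V True True False) = 2709380876"
| "vv (V True True True) = 1000000001"
| "vv (Z False False) = 4294388006"
| "vv (Z False True) = 3136677825"
| "vv (Z True False) = 3631363853"
| "vv (Z True True) = 2473653672"

lemma vv_ge1: "vv q \<ge> 1"
  by (cases q rule: vv.cases) auto

definition Wt :: "st \<Rightarrow> letter \<Rightarrow> real" where
  "Wt q a = (case dl q a of None \<Rightarrow> 0 | Some q' \<Rightarrow> vv q')"

lemma Wineq: "Wt q A + Wt q B + (Wt q C + Wt q D) \<le> 3.709381 * vv q"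
  by (cases q rule: vv.cases) (simp_all add: Wt_def)

lemma term_bound:
  assumes IH: "\<And>q. real (card {s. length s = n \<and> acc q s}) \<le> vv q * 3.709381 ^ n"
  shows "real (card {s. length s = n \<and> acc q (a#s)}) \<le> Wt q a * 3.709381 ^ n"
proof (cases "dl q a")
  case None
  then show ?thesis by (simp add: acc_Cons Wt_def)
next
  case (Some q')
  then show ?thesis using IH[of q'] by (simp add: acc_Cons Wt_def)
qed

lemma count_bound: "real (card {s. length s = n \<and> acc q s}) \<le> vv q * 3.709381 ^ n"
proof (induction n arbitrary: q)
  case 0
  have "{s::word. length s = 0 \<and> acc q s} \<subseteq> {[]}" by auto
  then have "card {s::word. length s = 0 \<and> acc q s} \<le> 1"
    using card_mono[of "{[]::word}"] by fastforce
  then show ?case using vv_ge1[of q] by simp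
next
  case (Suc n)
  let ?r = "3.709381 :: real"
  have "real (card {s. length s = Suc n \<and> acc q s}) =
     real (card {s. length s = n \<and> acc q (A#s)}) + real (card {s. length s = n \<and> acc q (B#s)}) +
     (real (card {s. length s = n \<and> acc q (C#s)}) + real (card {s. length s = n \<and> acc q (D#s)}))"
    by (subst card_Suc_split) simp
  also have "\<dots> \<le> Wt q A * ?r ^ n + Wt q B * ?r ^ n + (Wt q C * ?r ^ n + Wt q D * ?r ^ n)"
    by (intro add_mono term_bound[OF Suc.IH])
  also have "\<dots> = (Wt q A + Wt q B + (Wt q C + Wt q D)) * ?r ^ n" by (simp add: algebra_simps)
  also have "\<dots> \<le> (?r * vv q) * ?r ^ n" by (rule mult_right_mono[OF Wineq]) simp
  also have "\<dots> = vv q * ?r ^ Suc n" by simp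
  finally show ?case .
qed

definition rep :: "word \<Rightarrow> word list" where
  "rep w = (SOME Us. afree Us \<and> cw Us = w)"

lemma rep_spec: "w = [] \<or> hd w = A \<Longrightarrow> afree (rep w) \<and> cw (rep w) = w"
  unfolding rep_def by (rule someI_ex) (rule rep_ex)

lemma ncb_cw: "ncb (cw Us) \<Longrightarrow> \<forall>u\<in>set Us. ncb u"
proof (induction Us)
  case Nil then show ?case by simp
next
  case (Cons U Us)
  have "ncb (U @ cw Us)" using Cons.prems by (simp add: ncb_Cons)
  then show ?case using Cons.IH by (simp add: ncb_append)
qed

definition enc :: "word \<times> word \<Rightarrow> word" where
  "enc p = cw (il (rev (rep (fst p))) (rep (snd p)))"

lemma good_facts:
  assumes "good_pair n w z"
  shows "afree (rep w) \<and> cw (rep w) = w \<and> afree (rep z) \<and> cw (rep z) = z \<and>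
         length (rep w) = length (rep z) \<and> rep w \<noteq> []"
proof -
  have g: "w \<noteq> []" "z \<noteq> []" "hd w = A" "hd z = A"
     "length (A_positions w) = length (A_positions z)"
    using assms unfolding good_pair_def by auto
  have w: "afree (rep w) \<and> cw (rep w) = w" using rep_spec g by blast
  have z: "afree (rep z) \<and> cw (rep z) = z" using rep_spec g by blast
  have "length (rep w) = length (rep z)"
    using AP_len[of "rep w"] AP_len[of "rep z"] w z g(5) by simp
  moreover have "rep w \<noteq> []" using w g(1) by auto
  ultimately show ?thesis using w z by blast
qed

lemma enc_good:
  assumes gp: "good_pair n w z"
  shows "length (enc (w,z)) = n \<and> acc S (enc (w,z))"
proof -
  define Us where "Us = rep w"
  define Ys where "Ys = rep z"
  have f: "afree Us" "cw Us = w" "afree Ys" "cw Ys = z" "length Us = length Ys" "Us \<noteq> []"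
    using good_facts[OF gp] by (auto simp: Us_def Ys_def)
  have g: "length w + length z = n" "no_CB w" "no_CB z" "cond_iv w z"
    using gp unfolding good_pair_def by auto
  have e: "enc (w,z) = cw (il (rev Us) Ys)" by (simp add: enc_def Us_def Ys_def)
  have len: "length (enc (w,z)) = n"
    using e f g length_cw_il[of "rev Us" Ys] length_cw_rev[of Us] by simp
  have nU: "\<forall>u\<in>set (rev Us). ncb u" using ncb_cw[of Us] f(2) g(2) by (simp add: no_CB_ncb)
  have nY: "\<forall>u\<in>set Ys. ncb u" using ncb_cw[of Ys] f(4) g(3) by (simp add: no_CB_ncb)
  have sc: "segc (rev Us) Ys" using cond_seg[OF f(1) f(3) f(5)] f(2) f(4) g(4) by simp
  have a: "acc (VJ False) (tl (cw (il (rev Us) Ys)))"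
    by (rule acc_main) (use f nU nY sc in auto)
  obtain U' Us' where "rev Us = U' # Us'" using f(6) by (cases "rev Us") auto
  moreover obtain Y' Ys' where "Ys = Y' # Ys'" using f(5,6) by (cases Ys) auto
  ultimately have "cw (il (rev Us) Ys) = A # tl (cw (il (rev Us) Ys))" by simp
  then have "acc S (cw (il (rev Us) Ys))" using a by (metis acc_Cons dl.simps(1) option.case(2))
  then show ?thesis using len e by simp
qed

lemma enc_inj: "inj_on enc {(w, z). good_pair n w z}"
proof (rule inj_onI)
  fix p q assume p: "p \<in> {(w, z). good_pair n w z}" and q: "q \<in> {(w, z). good_pair n w z}"
    and eq: "enc p = enc q"
  obtain w z where pw: "p = (w,z)" "good_pair n w z" using p by auto
  obtain w' z' where qw: "q = (w',z')" "good_pair n w' z'" using q by auto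
  note f = good_facts[OF pw(2)] and f' = good_facts[OF qw(2)]
  have "il (rev (rep w)) (rep z) = il (rev (rep w')) (rep z')"
    using eq pw qw f f' by (intro cw_inj) (auto simp: enc_def intro: afree_il)
  then have "rev (rep w) = rev (rep w') \<and> rep z = rep z'"
    using f f' by (intro il_inj) auto
  then have "w = w' \<and> z = z'" using f f' by (metis rev_rev_ident)
  then show "p = q" using pw qw by simp
qed

theorem corollary3p4:
  shows "\<exists>c::real. c > 0 \<and> (\<forall>n\<ge>2. real (h n) \<le> c * 3.709381 ^ n)"
proof (intro exI[of _ "vv S"] conjI allI impI)
  show "vv S > 0" by simp
  fix n :: nat
  have "h n \<le> card {s. length s = n \<and> acc S s}"
    unfolding h_def
  proof (rule card_inj_on_le[OF enc_inj])
    show "enc ` {(w, z). good_pair n w z} \<subseteq> {s. length s = n \<and> acc S s}"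
      using enc_good by auto
    show "finite {s. length s = n \<and> acc S s}" by (rule finite_len)
  qed
  then show "real (h n) \<le> vv S * 3.709381 ^ n" using count_bound[of n S] by linarith
qed

end
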